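(* Let $G$ be a combinatorial 4-PPT of the interior of a simple cycle $C$ with $b$ vertices, of which $c$ have their reflex angle inside the cycle. Then the number $t$ of triangular faces of $G$ is $t=b-2c-2$.
   Context: An angle is a vertex–face incidence of a plane embedded graph. A combinatorial 4-PPT of the interior of a simple cycle $C$ means: a plane simple graph $G$ whose outer face is bounded by the simple cycle $C$, all of whose interior faces have size 3 or 4, with a tag "reflex" or "convex" on each interior angle such that every interior face has exactly three convex angles, every vertex not on $C$ is incident to exactly one reflex angle, and every vertex of $C$ is incident to at most one reflex angle (a vertex of $C$ "has its reflex angle inside the cycle" if it has a reflex-tagged angle in an interior face; the other vertices of $C$ have their reflex angle outside). For instance, $C$ together with everything inside it in a combinatorial 4-PPT (a combinatorial pointed pseudo-triangulation with interior faces of size 3 or 4) is such a structure. *)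

theory Defs
  imports Main
begin

(* A plane graph is encoded by its faces: each face is a cyclic list of vertices
   (its boundary walk, traversed with the face on the left). *)

definition cyc_darts :: "'a list \<Rightarrow> ('a \<times> 'a) set" where
  "cyc_darts f = {(f ! i, f ! (Suc i mod length f)) | i. i < length f}"

definition all_darts :: "'a list set \<Rightarrow> ('a \<times> 'a) set" where
  "all_darts FF = (\<Union>f\<in>FF. cyc_darts f)"

definition verts :: "'a list set \<Rightarrow> 'a set" where
  "verts FF = (\<Union>f\<in>FF. set f)"

definition edges :: "'a list set \<Rightarrow> 'a set set" where
  "edges FF = {{u, v} | u v. (u, v) \<in> all_darts FF}"

definition face_next :: "'a list set \<Rightarrow> ('a \<times> 'a) \<Rightarrow> ('a \<times> 'a) \<Rightarrow> bool" where
  "face_next FF d d' \<longleftrightarrow> (\<exists>f\<in>FF. \<exists>i<length f.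
      d = (f ! i, f ! (Suc i mod length f)) \<and>
      d' = (f ! (Suc i mod length f), f ! (Suc (Suc i) mod length f)))"

definition rot_step :: "'a list set \<Rightarrow> ('a \<times> 'a) \<Rightarrow> ('a \<times> 'a) \<Rightarrow> bool" where
  "rot_step FF d d' \<longleftrightarrow> face_next FF (snd d, fst d) d'"

(* Combinatorial plane simple graph on the sphere with face set FF
   (Heffter-Edmonds face-list encoding): every dart lies in exactly one face,
   darts come in reverse pairs, the rotation at each vertex is a single cycle,
   the graph is connected, and the Euler characteristic is 2 (sphere). *)
definition plane_faces :: "'a list set \<Rightarrow> bool" where
  "plane_faces FF \<longleftrightarrow>
     finite FF \<and>
     (\<forall>f\<in>FF. distinct f \<and> length f \<ge> 3) \<and>
     (\<forall>f\<in>FF. \<forall>g\<in>FF. f \<noteq> g \<longrightarrow> cyc_darts f \<inter> cyc_darts g = {}) \<and>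
     (\<forall>(u, v)\<in>all_darts FF. (v, u) \<in> all_darts FF) \<and>
     (\<forall>v\<in>verts FF. \<forall>d\<in>all_darts FF. \<forall>d'\<in>all_darts FF.
        fst d = v \<longrightarrow> fst d' = v \<longrightarrow> (d, d') \<in> {(a, b). rot_step FF a b}\<^sup>*) \<and>
     (\<forall>u\<in>verts FF. \<forall>v\<in>verts FF. (u, v) \<in> (all_darts FF)\<^sup>*) \<and>
     int (card (verts FF)) - int (card (edges FF)) + int (card FF) = 2"

(* G is a plane simple graph whose outer face is bounded by the simple cycle C
   and whose interior faces are the (simple-cycle) faces in F. *)
definition plane_disk :: "'a list \<Rightarrow> 'a list set \<Rightarrow> bool" where
  "plane_disk C F \<longleftrightarrow> distinct C \<and> length C \<ge> 3 \<and> C \<notin> F \<and> plane_faces (insert C F)"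

(* Angles are vertex-face incidences (v,f), v \<in> set f; reflex f v tags the angle
   of interior face f at v as reflex (otherwise convex). *)
definition comb_4PPT :: "'a list \<Rightarrow> 'a list set \<Rightarrow> ('a list \<Rightarrow> 'a \<Rightarrow> bool) \<Rightarrow> bool" where
  "comb_4PPT C F reflex \<longleftrightarrow>
     plane_disk C F \<and>
     (\<forall>f\<in>F. length f = 3 \<or> length f = 4) \<and>
     (\<forall>f\<in>F. card {v \<in> set f. \<not> reflex f v} = 3) \<and>
     (\<forall>v\<in>verts F - set C. card {f \<in> F. v \<in> set f \<and> reflex f v} = 1) \<and>
     (\<forall>v\<in>set C. card {f \<in> F. v \<in> set f \<and> reflex f v} \<le> 1)"

definition reflex_inside :: "'a list set \<Rightarrow> ('a list \<Rightarrow> 'a \<Rightarrow> bool) \<Rightarrow> 'a \<Rightarrow> bool" where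
  "reflex_inside F reflex v \<longleftrightarrow> (\<exists>f\<in>F. v \<in> set f \<and> reflex f v)"

end

theory Submission
  imports Defs
begin

lemma cyc_darts_img: "cyc_darts f = (\<lambda>i. (f ! i, f ! (Suc i mod length f))) ` {..<length f}"
  unfolding cyc_darts_def by auto

lemma card_cyc_darts:
  assumes "distinct f" shows "card (cyc_darts f) = length f"
proof -
  have "inj_on (\<lambda>i. (f ! i, f ! (Suc i mod length f))) {..<length f}"
    using assms by (auto simp: inj_on_def nth_eq_iff_index_eq)
  then show ?thesis by (simp add: cyc_darts_img card_image)
qed

lemma finite_cyc_darts: "finite (cyc_darts f)"
  by (simp add: cyc_darts_img)

lemma dart_neq:
  assumes "distinct f" "length f \<ge> 3" "(u,v) \<in> cyc_darts f" shows "u \<noteq> v"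
proof -
  obtain i where i: "i < length f" "u = f ! i" "v = f ! (Suc i mod length f)"
    using assms(3) unfolding cyc_darts_def by auto
  have "Suc i mod length f \<noteq> i"
  proof (cases "Suc i < length f")
    case True then show ?thesis by simp
  next
    case False then have "Suc i = length f" using i by simp
    then show ?thesis using assms(2) by simp
  qed
  moreover have "Suc i mod length f < length f" using i(1) by (intro mod_less_divisor) auto
  ultimately show ?thesis using i assms(1) by (simp add: nth_eq_iff_index_eq)
qed

lemma card_all_darts:
  assumes "finite FF" "\<forall>f\<in>FF. distinct f"
    "\<forall>f\<in>FF. \<forall>g\<in>FF. f \<noteq> g \<longrightarrow> cyc_darts f \<inter> cyc_darts g = {}"
  shows "card (all_darts FF) = (\<Sum>f\<in>FF. length f)"
  unfolding all_darts_def using assms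
  by (subst card_UN_disjoint) (auto simp: finite_cyc_darts card_cyc_darts)

lemma E_img: "{{u, v} | u v. (u, v) \<in> D} = (\<lambda>(u,v). {u,v}) ` D"
proof (rule set_eqI)
  fix x
  show "x \<in> {{u, v} | u v. (u, v) \<in> D} \<longleftrightarrow> x \<in> (\<lambda>(u,v). {u,v}) ` D"
  proof
    assume "x \<in> {{u, v} | u v. (u, v) \<in> D}"
    then obtain u v where "x = {u,v}" "(u,v) \<in> D" by blast
    then show "x \<in> (\<lambda>(u,v). {u,v}) ` D" by (simp add: rev_image_eqI)
  next
    assume "x \<in> (\<lambda>(u,v). {u,v}) ` D"
    then obtain a b where ab: "(a,b) \<in> D" and xe: "x = {a,b}" by auto
    have "\<exists>u v. x = {u,v} \<and> (u,v) \<in> D" using ab xe by blast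
    then show "x \<in> {{u, v} | u v. (u, v) \<in> D}" by simp
  qed
qed

lemma card_fibers:
  assumes "finite D" "\<And>e. e \<in> g ` D \<Longrightarrow> card {d \<in> D. g d = e} = k"
  shows "card D = k * card (g ` D)"
proof -
  have DU: "D = (\<Union>e\<in>g ` D. {d \<in> D. g d = e})" by blast
  have "card D = card (\<Union>e\<in>g ` D. {d \<in> D. g d = e})" using DU by (rule arg_cong)
  also have "\<dots> = (\<Sum>e\<in>g ` D. card {d \<in> D. g d = e})"
    by (rule card_UN_disjoint) (use assms(1) in auto)
  also have "\<dots> = (\<Sum>e\<in>g ` D. k)" using assms(2) by simp
  finally show ?thesis by simp
qed

lemma card_darts_edges:
  fixes D :: "('a \<times> 'a) set"
  assumes fin: "finite D" and sym: "\<forall>(u,v)\<in>D. (v,u) \<in> D" and irr: "\<forall>(u,v)\<in>D. u \<noteq> v"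
  shows "card D = 2 * card {{u, v} | u v. (u, v) \<in> D}"
  unfolding E_img
proof (rule card_fibers[OF fin])
  fix e assume "e \<in> (\<lambda>(u,v). {u,v}) ` D"
  then obtain u v where e: "e = {u,v}" "(u,v) \<in> D" by auto
  have uv: "u \<noteq> v" using e irr by auto
  have vu: "(v,u) \<in> D" using e sym by auto
  have "{d \<in> D. (\<lambda>(u,v). {u,v}) d = e} = {(u,v),(v,u)}"
  proof (rule set_eqI)
    fix d show "d \<in> {d \<in> D. (\<lambda>(u,v). {u,v}) d = e} \<longleftrightarrow> d \<in> {(u,v),(v,u)}"
    proof (cases d)
      case (Pair a b)
      have "{a,b} = {u,v} \<longleftrightarrow> (a = u \<and> b = v) \<or> (a = v \<and> b = u)" by (rule doubleton_eq_iff)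
      then show ?thesis using Pair e vu by auto
    qed
  qed
  then show "card {d \<in> D. (\<lambda>(u,v). {u,v}) d = e} = 2" using uv by simp
qed

lemma card_filter_split:
  assumes "finite A" shows "card A = card {x \<in> A. P x} + card {x \<in> A. \<not> P x}"
proof -
  have "A = {x \<in> A. P x} \<union> {x \<in> A. \<not> P x}" by blast
  then have "card A = card ({x \<in> A. P x} \<union> {x \<in> A. \<not> P x})" by (rule arg_cong)
  also have "\<dots> = card {x \<in> A. P x} + card {x \<in> A. \<not> P x}"
    by (rule card_Un_disjoint) (use assms in auto)
  finally show ?thesis .
qed

lemma card_filter_sum:
  assumes "finite A" shows "card {x \<in> A. P x} = (\<Sum>x\<in>A. if P x then 1 else 0)"
proof -
  have "(\<Sum>x\<in>A. if P x then 1 else 0) = (\<Sum>x\<in>{x \<in> A. P x}. (1::nat))"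
    by (rule sum.inter_filter[symmetric, OF assms])
  then show ?thesis by simp
qed

lemma double_count:
  assumes "finite F" "finite V" "\<And>f. f \<in> F \<Longrightarrow> set f \<subseteq> V"
  shows "(\<Sum>f\<in>F. card {v \<in> set f. R f v}) = (\<Sum>v\<in>V. card {f \<in> F. v \<in> set f \<and> R f v})"
proof -
  have "(\<Sum>f\<in>F. card {v \<in> set f. R f v}) = (\<Sum>f\<in>F. \<Sum>v\<in>V. if v \<in> set f \<and> R f v then 1 else 0)"
  proof (rule sum.cong)
    fix f assume "f \<in> F"
    then have "{v \<in> set f. R f v} = {v \<in> V. v \<in> set f \<and> R f v}" using assms(3) by blast
    then show "card {v \<in> set f. R f v} = (\<Sum>v\<in>V. if v \<in> set f \<and> R f v then 1 else 0)"
      using card_filter_sum[OF assms(2), of "\<lambda>v. v \<in> set f \<and> R f v"] by simp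
  qed simp
  also have "\<dots> = (\<Sum>v\<in>V. \<Sum>f\<in>F. if v \<in> set f \<and> R f v then 1 else 0)" by (rule sum.swap)
  also have "\<dots> = (\<Sum>v\<in>V. card {f \<in> F. v \<in> set f \<and> R f v})"
    by (rule sum.cong[OF refl], rule card_filter_sum[OF assms(1), symmetric])
  finally show ?thesis .
qed

theorem corollary1:
  fixes C :: "'a list" and F :: "'a list set" and reflex :: "'a list \<Rightarrow> 'a \<Rightarrow> bool"
    and b c t :: nat
  assumes "comb_4PPT C F reflex"
    and "b = length C"
    and "c = card {v \<in> set C. reflex_inside F reflex v}"
    and "t = card {f \<in> F. length f = 3}"
  shows "int t = int b - 2 * int c - 2"
proof -
  let ?FF = "insert C F"
  have H1: "plane_disk C F \<and> (\<forall>f\<in>F. length f = 3 \<or> length f = 4) \<and>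
     (\<forall>f\<in>F. card {v \<in> set f. \<not> reflex f v} = 3) \<and>
     (\<forall>v\<in>verts F - set C. card {f \<in> F. v \<in> set f \<and> reflex f v} = 1) \<and>
     (\<forall>v\<in>set C. card {f \<in> F. v \<in> set f \<and> reflex f v} \<le> 1)"
    using assms(1) unfolding comb_4PPT_def .
  have pd: "plane_disk C F" using H1 by (elim conjE) assumption
  have len34: "\<forall>f\<in>F. length f = 3 \<or> length f = 4" using H1 by (elim conjE) assumption
  have conv: "\<forall>f\<in>F. card {v \<in> set f. \<not> reflex f v} = 3" using H1 by (elim conjE) assumption
  have inn: "\<forall>v\<in>verts F - set C. card {f \<in> F. v \<in> set f \<and> reflex f v} = 1" using H1 by (elim conjE) assumption
  have bnd: "\<forall>v\<in>set C. card {f \<in> F. v \<in> set f \<and> reflex f v} \<le> 1" using H1 by (elim conjE) assumption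
  have H2: "distinct C \<and> length C \<ge> 3 \<and> C \<notin> F \<and> plane_faces ?FF"
    using pd unfolding plane_disk_def .
  have dC: "distinct C" using H2 by (elim conjE) assumption
  have CF: "C \<notin> F" using H2 by (elim conjE) assumption
  have pf: "plane_faces ?FF" using H2 by (elim conjE) assumption
  note H3 = pf[unfolded plane_faces_def]
  have finFF: "finite ?FF" using H3 by (elim conjE) assumption
  have dist: "\<forall>f\<in>?FF. distinct f \<and> length f \<ge> 3" using H3 by (elim conjE) assumption
  have disj: "\<forall>f\<in>?FF. \<forall>g\<in>?FF. f \<noteq> g \<longrightarrow> cyc_darts f \<inter> cyc_darts g = {}" using H3 by (elim conjE) assumption
  have sym: "\<forall>(u, v)\<in>all_darts ?FF. (v, u) \<in> all_darts ?FF" using H3 by (elim conjE) assumption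
  have euler: "int (card (verts ?FF)) - int (card (edges ?FF)) + int (card ?FF) = 2" using H3 by (elim conjE) assumption
  have finF: "finite F" using finFF by simp
  define N where "N = card F"
  define L where "L = (\<Sum>f\<in>F. length f)"
  have cFF: "card ?FF = N + 1" using finF CF N_def by simp
  have cD: "card (all_darts ?FF) = b + L"
    using card_all_darts[OF finFF _ disj] dist finF CF assms(2) L_def by simp
  have finD: "finite (all_darts ?FF)" unfolding all_darts_def
    by (rule finite_UN_I[OF finFF finite_cyc_darts])
  have irr0: "\<And>u v. (u,v) \<in> all_darts ?FF \<Longrightarrow> u \<noteq> v"
  proof -
    fix u v assume "(u,v) \<in> all_darts ?FF"
    then obtain f where f: "f \<in> ?FF" "(u,v) \<in> cyc_darts f" unfolding all_darts_def by blast
    have d1: "distinct f" and d2: "length f \<ge> 3" using f(1) dist by auto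
    show "u \<noteq> v" by (rule dart_neq[OF d1 d2 f(2)])
  qed
  have irr: "\<forall>(u, v)\<in>all_darts ?FF. u \<noteq> v"
  proof (intro ballI)
    fix d assume "d \<in> all_darts ?FF"
    then show "case d of (u, v) \<Rightarrow> u \<noteq> v" using irr0 by (cases d) simp
  qed
  have cE: "b + L = 2 * card (edges ?FF)"
    using card_darts_edges[OF finD sym irr] cD unfolding edges_def by simp
  have finVF: "finite (verts F)" unfolding verts_def using finF by simp
  have VFF: "verts ?FF = set C \<union> verts F" unfolding verts_def by simp
  have cV: "card (verts ?FF) = card (verts F - set C) + b"
  proof -
    have "verts ?FF = (verts F - set C) \<union> set C" using VFF by blast
    then have "card (verts ?FF) = card ((verts F - set C) \<union> set C)" by (rule arg_cong)
    also have "\<dots> = card (verts F - set C) + card (set C)"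
      by (rule card_Un_disjoint) (use finVF in auto)
    finally show ?thesis using dC assms(2) by (simp add: distinct_card)
  qed
  have refl_f: "\<And>f. f \<in> F \<Longrightarrow> card {v \<in> set f. reflex f v} + 3 = length f"
  proof -
    fix f assume f: "f \<in> F"
    have "card (set f) = length f" using f dist by (simp add: distinct_card)
    then show "card {v \<in> set f. reflex f v} + 3 = length f"
      using card_filter_split[of "set f" "reflex f"] conv f by simp
  qed
  have sub: "\<And>f. f \<in> F \<Longrightarrow> set f \<subseteq> verts F" unfolding verts_def by blast
  have dc: "(\<Sum>f\<in>F. card {v \<in> set f. reflex f v}) = (\<Sum>v\<in>verts F. card {f \<in> F. v \<in> set f \<and> reflex f v})"
    by (rule double_count[OF finF finVF sub])
  have LR: "(\<Sum>f\<in>F. card {v \<in> set f. reflex f v}) + 3 * N = L"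
  proof -
    have "(\<Sum>f\<in>F. card {v \<in> set f. reflex f v}) + 3 * N = (\<Sum>f\<in>F. card {v \<in> set f. reflex f v} + 3)"
      using N_def by (simp add: sum.distrib)
    also have "\<dots> = L" unfolding L_def using refl_f by (rule sum.cong[OF refl])
    finally show ?thesis .
  qed
  let ?cnt = "\<lambda>v. card {f \<in> F. v \<in> set f \<and> reflex f v}"
  have RV: "(\<Sum>v\<in>verts F. ?cnt v) = card (verts F - set C) + c"
  proof -
    have "verts F = (verts F - set C) \<union> (verts F \<inter> set C)" by blast
    then have "(\<Sum>v\<in>verts F. ?cnt v) = (\<Sum>v\<in>(verts F - set C) \<union> (verts F \<inter> set C). ?cnt v)"
      by (rule arg_cong[where f="\<lambda>A. \<Sum>v\<in>A. ?cnt v"])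
    also have "\<dots> = (\<Sum>v\<in>verts F - set C. ?cnt v) + (\<Sum>v\<in>verts F \<inter> set C. ?cnt v)"
      by (rule sum.union_disjoint) (use finVF in auto)
    also have "(\<Sum>v\<in>verts F - set C. ?cnt v) = card (verts F - set C)"
      using inn by simp
    also have "(\<Sum>v\<in>verts F \<inter> set C. ?cnt v) = (\<Sum>v\<in>verts F \<inter> set C. of_bool (reflex_inside F reflex v))"
    proof (rule sum.cong[OF refl])
      fix v assume v: "v \<in> verts F \<inter> set C"
      have fin: "finite {f \<in> F. v \<in> set f \<and> reflex f v}" using finF by simp
      show "?cnt v = of_bool (reflex_inside F reflex v)"
      proof (cases "reflex_inside F reflex v")
        case True
        then have "{f \<in> F. v \<in> set f \<and> reflex f v} \<noteq> {}" unfolding reflex_inside_def by blast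
        then have "?cnt v \<noteq> 0" using fin by simp
        moreover have "?cnt v \<le> 1" using bnd v by blast
        ultimately show ?thesis using True by simp
      next
        case False
        then have "{f \<in> F. v \<in> set f \<and> reflex f v} = {}" unfolding reflex_inside_def by blast
        then have "?cnt v = 0" by (simp only: card.empty)
        then show ?thesis using False by simp
      qed
    qed
    also have "\<dots> = card ((verts F \<inter> set C) \<inter> {v. reflex_inside F reflex v})"
      using finVF by simp
    also have "(verts F \<inter> set C) \<inter> {v. reflex_inside F reflex v} = {v \<in> set C. reflex_inside F reflex v}"
      unfolding reflex_inside_def verts_def by blast
    finally show ?thesis using assms(3) by simp
  qed
  have LT: "int L = 4 * int N - int t"
  proof -
    have "int L = (\<Sum>f\<in>F. int (length f))" unfolding L_def by simp
    also have "\<dots> = (\<Sum>f\<in>F. 4 - of_bool (length f = 3))"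
      by (rule sum.cong[OF refl]) (use len34 in auto)
    also have "\<dots> = 4 * int N - int (card (F \<inter> {f. length f = 3}))"
      using finF N_def by (simp add: sum_subtractf)
    also have "F \<inter> {f. length f = 3} = {f \<in> F. length f = 3}" by blast
    finally show ?thesis using assms(4) by simp
  qed
  have e1: "int (card (verts F - set C)) + int b - int (card (edges ?FF)) + int N + 1 = 2"
    using euler cV cFF by simp
  have e2: "int b + int L = 2 * int (card (edges ?FF))" using cE by linarith
  have e3: "int (card (verts F - set C)) + int c + 3 * int N = int L"
    using LR dc RV by linarith
  show ?thesis using e1 e2 e3 LT by linarith
qed

end
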